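(* Let $M$ be a geodesic metric space with convex metric, $Z\subseteq M$, $\nu>0$, $L\ge0$. If a geodesic triangle $\Delta$ in $M$ is $\nu$--thin relative to $Z$ and the $\nu$--fat part of some side of $\Delta$ has length at most $L$, then $\Delta$ is $2(L+\nu)$--thin.
   Context: For a geodesic triangle $\Delta(a,b,c)$ let $\pi\colon\Delta\to Y_{abc}$ be the map to the comparison tripod. $\Delta$ is $\nu$--thin if $\operatorname{diam}\pi^{-1}(p)\le\nu$ for all $p\in Y_{abc}$. $\Delta$ is $\nu$--thin relative to $U$ if it is not $\nu$--thin and for every $p\in Y_{abc}$ either $\operatorname{diam}\pi^{-1}(p)\le\nu$ or $\pi^{-1}(p)\subseteq N_\nu(U)$. The $\nu$--fat part of $\Delta$ is the union of the fibers of $\pi$ of diameter $\ge\nu$; the $\nu$--fat part of a side is its intersection with the $\nu$--fat part of $\Delta$. A metric is convex if the distance function between two constant-speed geodesics is convex. *)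

theory Defs
  imports "HOL-Analysis.Analysis"
begin

definition geodesic :: "(real \<Rightarrow> 'a::metric_space) \<Rightarrow> 'a \<Rightarrow> 'a \<Rightarrow> bool" where
  "geodesic g x y \<longleftrightarrow> g 0 = x \<and> g (dist x y) = y \<and>
     (\<forall>s\<in>{0..dist x y}. \<forall>t\<in>{0..dist x y}. dist (g s) (g t) = \<bar>s - t\<bar>)"

definition geodesic_space :: "'a::metric_space set \<Rightarrow> bool" where
  "geodesic_space S \<longleftrightarrow>
     (\<forall>x\<in>S. \<forall>y\<in>S. \<exists>g. geodesic g x y \<and> g ` {0..dist x y} \<subseteq> S)"

definition cs_geodesic :: "(real \<Rightarrow> 'a::metric_space) \<Rightarrow> bool" where
  "cs_geodesic \<gamma> \<longleftrightarrow>
     (\<forall>s\<in>{0..1}. \<forall>t\<in>{0..1}. dist (\<gamma> s) (\<gamma> t) = \<bar>s - t\<bar> * dist (\<gamma> 0) (\<gamma> 1))"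

definition convex_metric :: "'a::metric_space set \<Rightarrow> bool" where
  "convex_metric S \<longleftrightarrow>
     (\<forall>\<gamma>1 \<gamma>2. cs_geodesic \<gamma>1 \<and> cs_geodesic \<gamma>2 \<and> \<gamma>1 ` {0..1} \<subseteq> S \<and> \<gamma>2 ` {0..1} \<subseteq> S
        \<longrightarrow> convex_on {0..1} (\<lambda>t. dist (\<gamma>1 t) (\<gamma>2 t)))"

text \<open>A geodesic triangle Delta(a,b,c) with sides p0 = [a,b], p1 = [b,c], p2 = [c,a];
  side i runs from vertex i to vertex (i+1) mod 3.\<close>
definition geodesic_triangle ::
  "'a::metric_space \<Rightarrow> 'a \<Rightarrow> 'a \<Rightarrow> (real \<Rightarrow> 'a) \<Rightarrow> (real \<Rightarrow> 'a) \<Rightarrow> (real \<Rightarrow> 'a) \<Rightarrow> bool" where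
  "geodesic_triangle a b c p0 p1 p2 \<longleftrightarrow> geodesic p0 a b \<and> geodesic p1 b c \<and> geodesic p2 c a"

definition side_len :: "'a::metric_space \<Rightarrow> 'a \<Rightarrow> 'a \<Rightarrow> nat \<Rightarrow> real" where
  "side_len a b c i = (if i = 0 then dist a b else if i = 1 then dist b c else dist c a)"

definition side_pt :: "(real \<Rightarrow> 'a) \<Rightarrow> (real \<Rightarrow> 'a) \<Rightarrow> (real \<Rightarrow> 'a) \<Rightarrow> nat \<Rightarrow> real \<Rightarrow> 'a" where
  "side_pt p0 p1 p2 i t = (if i = 0 then p0 t else if i = 1 then p1 t else p2 t)"

definition gromov :: "'a::metric_space \<Rightarrow> 'a \<Rightarrow> 'a \<Rightarrow> real" where
  "gromov x y z = (dist x y + dist x z - dist y z) / 2"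

text \<open>Leg length of the tripod at vertex i (0 = a, 1 = b, 2 = c).\<close>
definition leg_len :: "'a::metric_space \<Rightarrow> 'a \<Rightarrow> 'a \<Rightarrow> nat \<Rightarrow> real" where
  "leg_len a b c i = (if i = 0 then gromov a b c else if i = 1 then gromov b c a else gromov c a b)"

text \<open>Points of the tripod Y_abc: (leg, distance from the centre); the centre is (0,0).\<close>
definition tp :: "nat \<Rightarrow> real \<Rightarrow> nat \<times> real" where
  "tp i r = (if r = 0 then (0, 0) else (i, r))"

text \<open>The comparison map pi on side i at arclength parameter t (from vertex i).\<close>
definition tri_pi :: "'a::metric_space \<Rightarrow> 'a \<Rightarrow> 'a \<Rightarrow> nat \<Rightarrow> real \<Rightarrow> nat \<times> real" where
  "tri_pi a b c i t = (let g = leg_len a b c i in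
      if t \<le> g then tp i (g - t) else tp ((i + 1) mod 3) (t - g))"

text \<open>Delta as the disjoint union of its three sides.\<close>
definition tri_dom :: "'a::metric_space \<Rightarrow> 'a \<Rightarrow> 'a \<Rightarrow> (nat \<times> real) set" where
  "tri_dom a b c = {(i, t). i < 3 \<and> t \<in> {0..side_len a b c i}}"

definition tripod :: "'a::metric_space \<Rightarrow> 'a \<Rightarrow> 'a \<Rightarrow> (nat \<times> real) set" where
  "tripod a b c = (\<lambda>(i, t). tri_pi a b c i t) ` tri_dom a b c"

definition fiber ::
  "'a::metric_space \<Rightarrow> 'a \<Rightarrow> 'a \<Rightarrow> (real \<Rightarrow> 'a) \<Rightarrow> (real \<Rightarrow> 'a) \<Rightarrow> (real \<Rightarrow> 'a) \<Rightarrow> nat \<times> real \<Rightarrow> 'a set" where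
  "fiber a b c p0 p1 p2 y =
     {side_pt p0 p1 p2 i t | i t. (i, t) \<in> tri_dom a b c \<and> tri_pi a b c i t = y}"

definition thin_triangle ::
  "real \<Rightarrow> 'a::metric_space \<Rightarrow> 'a \<Rightarrow> 'a \<Rightarrow> (real \<Rightarrow> 'a) \<Rightarrow> (real \<Rightarrow> 'a) \<Rightarrow> (real \<Rightarrow> 'a) \<Rightarrow> bool" where
  "thin_triangle \<nu> a b c p0 p1 p2 \<longleftrightarrow>
     (\<forall>y\<in>tripod a b c. diameter (fiber a b c p0 p1 p2 y) \<le> \<nu>)"

definition nbhd :: "real \<Rightarrow> 'a::metric_space set \<Rightarrow> 'a set" where
  "nbhd \<nu> U = {x. \<exists>u\<in>U. dist x u < \<nu>}"

definition rel_thin_triangle ::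
  "real \<Rightarrow> 'a::metric_space set \<Rightarrow> 'a \<Rightarrow> 'a \<Rightarrow> 'a \<Rightarrow> (real \<Rightarrow> 'a) \<Rightarrow> (real \<Rightarrow> 'a) \<Rightarrow> (real \<Rightarrow> 'a) \<Rightarrow> bool" where
  "rel_thin_triangle \<nu> U a b c p0 p1 p2 \<longleftrightarrow>
     \<not> thin_triangle \<nu> a b c p0 p1 p2 \<and>
     (\<forall>y\<in>tripod a b c. diameter (fiber a b c p0 p1 p2 y) \<le> \<nu> \<or>
                        fiber a b c p0 p1 p2 y \<subseteq> nbhd \<nu> U)"

definition fat_side ::
  "real \<Rightarrow> 'a::metric_space \<Rightarrow> 'a \<Rightarrow> 'a \<Rightarrow> (real \<Rightarrow> 'a) \<Rightarrow> (real \<Rightarrow> 'a) \<Rightarrow> (real \<Rightarrow> 'a) \<Rightarrow> nat \<Rightarrow> 'a set" where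
  "fat_side \<nu> a b c p0 p1 p2 i =
     side_pt p0 p1 p2 i ` {t \<in> {0..side_len a b c i}.
        diameter (fiber a b c p0 p1 p2 (tri_pi a b c i t)) \<ge> \<nu>}"

end

theory Submission
  imports Defs
begin

lemma diameter_le_metric:
  fixes S :: "'a::metric_space set"
  assumes "0 \<le> d" and "\<And>x y. x \<in> S \<Longrightarrow> y \<in> S \<Longrightarrow> dist x y \<le> d"
  shows "diameter S \<le> d"
  using assms by (auto simp: diameter_def intro: cSUP_least)

lemma convex_mono0:
  fixes h :: "real \<Rightarrow> real"
  assumes cv: "convex_on {0..1} h" and h0: "h 0 = 0" and nn: "\<And>x. h x \<ge> 0"
    and xy: "0 \<le> x" "x \<le> y" "y \<le> 1"
  shows "h x \<le> h y"
proof (cases "y = 0")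
  case True then show ?thesis using xy by simp
next
  case False
  then have yp: "y > 0" using xy by simp
  define t where "t = x / y"
  have t01: "0 \<le> t" "t \<le> 1" using xy yp by (auto simp: t_def)
  have "h ((1 - t) *\<^sub>R 0 + t *\<^sub>R y) \<le> (1 - t) * h 0 + t * h y"
    using convex_onD[OF cv t01, of 0 y] xy by auto
  moreover have "(1 - t) *\<^sub>R 0 + t *\<^sub>R y = x" using yp by (simp add: t_def)
  ultimately have "h x \<le> t * h y" using h0 by simp
  also have "\<dots> \<le> h y" using t01 nn[of y] by (simp add: mult_left_le_one_le)
  finally show ?thesis .
qed

locale tri =
  fixes a b c :: "'a::metric_space" and p0 p1 p2 :: "real \<Rightarrow> 'a"
  assumes gt: "geodesic_triangle a b c p0 p1 p2"
begin

definition V :: "nat \<Rightarrow> 'a" where "V j = (if j = 0 then a else if j = 1 then b else c)"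
abbreviation "P \<equiv> side_pt p0 p1 p2"
abbreviation "G \<equiv> leg_len a b c"
abbreviation "S \<equiv> side_len a b c"
definition nx :: "nat \<Rightarrow> nat" where "nx j = (j + 1) mod 3"
definition pv :: "nat \<Rightarrow> nat" where "pv j = (j + 2) mod 3"

lemma j3: "j < 3 \<Longrightarrow> j = 0 \<or> j = 1 \<or> j = (2::nat)" by auto

lemma P012: "P 0 = p0" "P 1 = p1" "P (Suc 0) = p1" "P 2 = p2" by (auto simp: side_pt_def fun_eq_iff)

lemma geo: "j < 3 \<Longrightarrow> geodesic (P j) (V j) (V (nx j))"
  using gt j3[of j] by (auto simp: geodesic_triangle_def P012 V_def nx_def)

lemma Sdist: "j < 3 \<Longrightarrow> S j = dist (V j) (V (nx j))"
  using j3[of j] by (auto simp: side_len_def V_def nx_def dist_commute)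

lemma isom: "j < 3 \<Longrightarrow> s \<in> {0..S j} \<Longrightarrow> t \<in> {0..S j} \<Longrightarrow> dist (P j s) (P j t) = \<bar>s - t\<bar>"
  using geo[of j] Sdist[of j] unfolding geodesic_def by auto

lemma P0: "j < 3 \<Longrightarrow> P j 0 = V j"
  using geo[of j] unfolding geodesic_def by auto

lemma PS: "j < 3 \<Longrightarrow> P j (S j) = V (nx j)"
  using geo[of j] Sdist[of j] unfolding geodesic_def by auto

lemma G_nonneg: "j < 3 \<Longrightarrow> 0 \<le> G j"
  using j3[of j] dist_triangle[of a b c] dist_triangle[of b c a] dist_triangle[of c a b]
  by (auto simp: leg_len_def gromov_def dist_commute)

lemma S_eq: "j < 3 \<Longrightarrow> S j = G j + G (nx j)"
  using j3[of j] by (auto simp: leg_len_def gromov_def side_len_def nx_def dist_commute field_simps)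

lemma nx_lt: "nx j < 3" by (simp add: nx_def)
lemma pv_lt: "pv j < 3" by (simp add: pv_def)
lemma nx_pv: "j < 3 \<Longrightarrow> nx (pv j) = j" using j3[of j] by (auto simp: nx_def pv_def)
lemma pv_nx: "j < 3 \<Longrightarrow> pv (nx j) = j" using j3[of j] by (auto simp: nx_def pv_def)

lemma G_le_S: "j < 3 \<Longrightarrow> G j \<le> S j"
  using S_eq[of j] G_nonneg[of "nx j"] nx_lt by auto

lemma G_le_Spv: "j < 3 \<Longrightarrow> G j \<le> S (pv j)"
  using S_eq[of "pv j"] G_nonneg[of "pv j"] pv_lt nx_pv by auto

lemma pi_leg: "m < 3 \<Longrightarrow> 0 \<le> s \<Longrightarrow> s \<le> G m \<Longrightarrow> tri_pi a b c m s = tp m (G m - s)"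
  by (simp add: tri_pi_def Let_def)

lemma pi_leg2: assumes "m < 3" "0 \<le> s" "s \<le> G m"
  shows "tri_pi a b c (pv m) (S (pv m) - s) = tp m (G m - s)"
proof -
  have Se: "S (pv m) = G (pv m) + G m" using S_eq[of "pv m"] pv_lt nx_pv assms by simp
  have m1: "(pv m + 1) mod 3 = m" using nx_pv[OF assms(1)] by (simp add: nx_def)
  show ?thesis
  proof (cases "s = G m")
    case True then show ?thesis using Se by (simp add: tri_pi_def Let_def tp_def)
  next
    case False
    then have "\<not> S (pv m) - s \<le> G (pv m)" using Se assms by auto
    then show ?thesis using Se m1 by (simp add: tri_pi_def Let_def)
  qed
qed

lemma normal_form:
  assumes "i < 3" "t \<in> {0..S i}"
  shows "\<exists>m<3. \<exists>s\<in>{0..G m}. tri_pi a b c i t = tp m (G m - s) \<and>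
           (P i t = P m s \<or> P i t = P (pv m) (S (pv m) - s))"
proof (cases "t \<le> G i")
  case True
  then show ?thesis using assms by (intro exI[of _ i]) (auto simp: tri_pi_def Let_def)
next
  case False
  have Se: "S i = G i + G (nx i)" using S_eq assms by simp
  show ?thesis
  proof (intro exI[of _ "nx i"] conjI bexI[of _ "S i - t"])
    show "nx i < 3" by (rule nx_lt)
    show "S i - t \<in> {0..G (nx i)}" using Se assms False by auto
    show "tri_pi a b c i t = tp (nx i) (G (nx i) - (S i - t))"
      using False Se by (simp add: tri_pi_def Let_def nx_def)
    show "P i t = P (nx i) (S i - t) \<or> P i t = P (pv (nx i)) (S (pv (nx i)) - (S i - t))"
      using pv_nx assms by simp
  qed
qed

definition F :: "nat \<Rightarrow> real \<Rightarrow> real" where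
  "F m s = dist (P m s) (P (pv m) (S (pv m) - s))"

lemma F0: "m < 3 \<Longrightarrow> F m 0 = 0"
  using P0[of m] PS[of "pv m"] pv_lt nx_pv by (simp add: F_def)

lemma F_lip:
  assumes "m < 3"
  shows "2-lipschitz_on {0..G m} (F m)"
proof (rule lipschitz_onI)
  fix x y assume xy: "x \<in> {0..G m}" "y \<in> {0..G m}"
  have "dist (P m x) (P m y) = \<bar>x - y\<bar>"
    using isom[OF assms] xy G_le_S[OF assms] by auto
  moreover have "dist (P (pv m) (S (pv m) - x)) (P (pv m) (S (pv m) - y)) = \<bar>x - y\<bar>"
    using isom[OF pv_lt[of m]] xy G_le_Spv[OF assms] by auto
  ultimately have "\<bar>F m x - F m y\<bar> \<le> 2 * \<bar>x - y\<bar>"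
    unfolding F_def
    using dist_triangle[of "P m x" "P (pv m) (S (pv m) - x)" "P m y"]
      dist_triangle[of "P m y" "P (pv m) (S (pv m) - y)" "P m x"]
      dist_triangle[of "P m x" "P (pv m) (S (pv m) - y)" "P (pv m) (S (pv m) - x)"]
      dist_triangle[of "P m y" "P (pv m) (S (pv m) - x)" "P (pv m) (S (pv m) - y)"]
    by (auto simp: dist_commute abs_le_iff)
  then show "dist (F m x) (F m y) \<le> 2 * dist x y" by (simp add: dist_real_def)
qed auto

lemma F_mono:
  assumes cm: "convex_metric (UNIV :: 'a set)" and m: "m < 3"
    and ss: "0 \<le> s" "s \<le> s'" "s' \<le> G m"
  shows "F m s \<le> F m s'"
proof (cases "G m = 0")
  case True then have "s = s'" using ss by linarith
  then show ?thesis by simp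
next
  case False
  then have Gp: "G m > 0" using G_nonneg[OF m] by simp
  define g1 where "g1 = (\<lambda>l. P m (l * G m))"
  define g2 where "g2 = (\<lambda>l. P (pv m) (S (pv m) - l * G m))"
  have GS: "G m \<le> S m" "G m \<le> S (pv m)" using G_le_S[OF m] G_le_Spv[OF m] by auto
  have lg: "0 \<le> l * G m" "l * G m \<le> G m" if "l \<in> {0..1}" for l
    using that Gp by (auto simp: mult_left_le_one_le)
  have d1: "dist (g1 x) (g1 y) = \<bar>x - y\<bar> * G m" if "x \<in> {0..1}" "y \<in> {0..1}" for x y
  proof -
    have "dist (g1 x) (g1 y) = \<bar>x * G m - y * G m\<bar>"
      unfolding g1_def using isom[OF m] lg[OF that(1)] lg[OF that(2)] GS by auto
    also have "\<dots> = \<bar>x - y\<bar> * G m" using Gp by (simp add: left_diff_distrib[symmetric] abs_mult)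
    finally show ?thesis .
  qed
  have d2: "dist (g2 x) (g2 y) = \<bar>x - y\<bar> * G m" if "x \<in> {0..1}" "y \<in> {0..1}" for x y
  proof -
    have "dist (g2 x) (g2 y) = \<bar>(S (pv m) - x * G m) - (S (pv m) - y * G m)\<bar>"
      unfolding g2_def using isom[OF pv_lt[of m]] lg[OF that(1)] lg[OF that(2)] GS by auto
    also have "\<dots> = \<bar>x - y\<bar> * G m" using Gp by (simp add: left_diff_distrib[symmetric] abs_mult abs_minus_commute)
    finally show ?thesis .
  qed
  have cs1: "cs_geodesic g1" unfolding cs_geodesic_def using d1[of 0 1] d1 by simp
  have cs2: "cs_geodesic g2" unfolding cs_geodesic_def using d2[of 0 1] d2 by simp
  have cv: "convex_on {0..1} (\<lambda>l. dist (g1 l) (g2 l))"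
    using cm cs1 cs2 unfolding convex_metric_def by blast
  have h0: "dist (g1 0) (g2 0) = 0"
    using F0[OF m] by (simp add: g1_def g2_def F_def)
  have "dist (g1 (s / G m)) (g2 (s / G m)) \<le> dist (g1 (s' / G m)) (g2 (s' / G m))"
    by (rule convex_mono0[OF cv h0]) (use ss Gp in \<open>auto simp: divide_right_mono\<close>)
  then show ?thesis using Gp by (simp add: g1_def g2_def F_def)
qed

lemma in_fiber1: "m < 3 \<Longrightarrow> s \<in> {0..G m} \<Longrightarrow> P m s \<in> fiber a b c p0 p1 p2 (tp m (G m - s))"
  unfolding fiber_def tri_dom_def using pi_leg[of m s] G_le_S[of m]
  by (auto intro!: exI[of _ m] exI[of _ s])

lemma in_fiber2: "m < 3 \<Longrightarrow> s \<in> {0..G m} \<Longrightarrow>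
    P (pv m) (S (pv m) - s) \<in> fiber a b c p0 p1 p2 (tp m (G m - s))"
  unfolding fiber_def tri_dom_def using pi_leg2[of m s] G_le_Spv[of m] pv_lt[of m]
  by (auto intro!: exI[of _ "pv m"] exI[of _ "S (pv m) - s"])

definition R :: real where "R = 2 * (S 0 + S 1 + S 2)"

lemma near_a: assumes "i < 3" "t \<in> {0..S i}" shows "dist a (P i t) \<le> R"
proof -
  have "dist (V i) (P i t) = t" using isom[OF assms(1), of 0 t] assms P0[OF assms(1)] by auto
  moreover have "dist a (V i) \<le> S 0 + S 1 + S 2"
    using j3[of i] assms(1) by (auto simp: V_def side_len_def dist_commute)
  moreover have "S 0 \<ge> 0" "S 1 \<ge> 0" "S 2 \<ge> 0" by (auto simp: side_len_def)
  ultimately show ?thesis using dist_triangle[of a "P i t" "V i"] assms(2) j3[of i] assms(1)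
    unfolding R_def by auto
qed

lemma fiber_bounded: "bounded (fiber a b c p0 p1 p2 y)"
proof -
  have "fiber a b c p0 p1 p2 y \<subseteq> cball a R"
    unfolding fiber_def tri_dom_def using near_a by auto
  then show ?thesis using bounded_subset bounded_cball by blast
qed

lemma fat_bounded: "i < 3 \<Longrightarrow> bounded (fat_side \<nu> a b c p0 p1 p2 i)"
proof -
  assume i: "i < 3"
  have "fat_side \<nu> a b c p0 p1 p2 i \<subseteq> cball a R"
    unfolding fat_side_def using near_a[OF i] by auto
  then show ?thesis using bounded_subset bounded_cball by blast
qed

lemma Fc: "j < 3 \<Longrightarrow> F j (G j) = dist (P j (G j)) (P (pv j) (G (pv j)))"
  using S_eq[of "pv j"] pv_lt[of j] nx_pv[of j] by (simp add: F_def)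

lemma F_nonneg: "0 \<le> F m s" by (simp add: F_def)

lemma center_pair:
  assumes "j < 3" "j' < 3" "\<forall>j<3. F j (G j) \<le> B"
  shows "dist (P j (G j)) (P j' (G j')) \<le> B"
proof -
  have pv: "pv 0 = 2" "pv 1 = 0" "pv 2 = 1" by (auto simp: pv_def)
  have "dist (P 0 (G 0)) (P 2 (G 2)) \<le> B" using assms(3)[rule_format, of 0] Fc[of 0] pv by simp
  moreover have "dist (P 1 (G 1)) (P 0 (G 0)) \<le> B" using assms(3)[rule_format, of 1] Fc[of 1] pv by simp
  moreover have "dist (P 2 (G 2)) (P 1 (G 1)) \<le> B" using assms(3)[rule_format, of 2] Fc[of 2] pv by simp
  moreover have "0 \<le> B" using assms(3) F_nonneg[of 0 "G 0"] by force
  ultimately show ?thesis using j3[OF assms(1)] j3[OF assms(2)]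
    by (auto simp: dist_commute)
qed

lemma pair_bound:
  assumes x: "x \<in> fiber a b c p0 p1 p2 y" and x': "x' \<in> fiber a b c p0 p1 p2 y"
    and cm: "convex_metric (UNIV :: 'a set)"
    and B: "\<forall>j<3. F j (G j) \<le> B"
  shows "dist x x' \<le> B"
proof -
  obtain i t where it: "x = P i t" "i < 3" "t \<in> {0..S i}" "tri_pi a b c i t = y"
    using x unfolding fiber_def tri_dom_def by auto
  obtain i' t' where it': "x' = P i' t'" "i' < 3" "t' \<in> {0..S i'}" "tri_pi a b c i' t' = y"
    using x' unfolding fiber_def tri_dom_def by auto
  obtain m s where ms: "m < 3" "s \<in> {0..G m}" "y = tp m (G m - s)"
     "x = P m s \<or> x = P (pv m) (S (pv m) - s)"
    using normal_form[OF it(2,3)] it by metis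
  obtain m' s' where ms': "m' < 3" "s' \<in> {0..G m'}" "y = tp m' (G m' - s')"
     "x' = P m' s' \<or> x' = P (pv m') (S (pv m') - s')"
    using normal_form[OF it'(2,3)] it' by metis
  have Sp: "S (pv j) - G j = G (pv j)" if "j < 3" for j
    using S_eq[of "pv j"] pv_lt[of j] nx_pv[OF that] by simp
  show ?thesis
  proof (cases "s = G m")
    case True
    then have y0: "y = (0, 0)" using ms by (simp add: tp_def)
    then have "s' = G m'" using ms' by (auto simp: tp_def split: if_splits)
    then show ?thesis
      using True ms(4) ms'(4) Sp[OF ms(1)] Sp[OF ms'(1)]
        center_pair[OF _ _ B] ms(1) ms'(1) pv_lt[of m] pv_lt[of m'] by auto
  next
    case False
    then have "y = (m, G m - s)" using ms by (simp add: tp_def)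
    then have "m' = m \<and> s' = s" using ms' False by (auto simp: tp_def split: if_splits)
    then have "dist x x' \<le> F m s" using ms(4) ms'(4) by (auto simp: F_def dist_commute)
    also have "\<dots> \<le> F m (G m)" using F_mono[OF cm ms(1)] ms(2) by auto
    also have "\<dots> \<le> B" using B ms(1) by auto
    finally show ?thesis .
  qed
qed


lemma leg_choice:
  assumes nu: "\<nu> > 0" and m: "m < 3"
    and cm: "convex_metric (UNIV :: 'a set)"
  shows "\<exists>u\<in>{0..G m}. F m (G m) \<le> 2 * (G m - u) + \<nu> \<and>
           (F m (G m) > \<nu> \<longrightarrow> F m u \<ge> \<nu>) \<and> (F m (G m) \<le> \<nu> \<longrightarrow> u = G m)"
proof (cases "F m (G m) \<le> \<nu>")
  case True then show ?thesis using G_nonneg[OF m] by (intro bexI[of _ "G m"]) auto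
next
  case False
  have cont: "continuous_on {0..G m} (F m)"
    using F_lip[OF m] by (rule lipschitz_on_continuous_on)
  obtain u where u: "0 \<le> u" "u \<le> G m" "F m u = \<nu>"
    using IVT'[of "F m" 0 \<nu> "G m", OF _ _ _ cont] F0[OF m] nu False G_nonneg[OF m] by auto
  have GS: "G m \<le> S m" "G m \<le> S (pv m)" using G_le_S[OF m] G_le_Spv[OF m] by auto
  let ?Q = "\<lambda>s. P (pv m) (S (pv m) - s)"
  have "F m (G m) = dist (P m (G m)) (?Q (G m))" by (simp add: F_def)
  also have "\<dots> \<le> dist (P m (G m)) (P m u) + dist (P m u) (?Q u) + dist (?Q u) (?Q (G m))"
    using dist_triangle[of "P m (G m)" "?Q (G m)" "P m u"]
      dist_triangle[of "P m u" "?Q (G m)" "?Q u"] by linarith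
  also have "dist (P m (G m)) (P m u) = G m - u" using isom[OF m] u GS by auto
  also have "dist (?Q u) (?Q (G m)) = G m - u" using isom[OF pv_lt[of m]] u GS by auto
  also have "dist (P m u) (?Q u) = \<nu>" using u by (simp add: F_def)
  finally show ?thesis using u False by (intro bexI[of _ u]) auto
qed

lemma fat_pts:
  assumes m: "m < 3" and s: "s \<in> {0..G m}" and F: "\<nu> \<le> F m s"
  shows "P m s \<in> fat_side \<nu> a b c p0 p1 p2 m"
    and "P (pv m) (S (pv m) - s) \<in> fat_side \<nu> a b c p0 p1 p2 (pv m)"
proof -
  let ?y = "tp m (G m - s)"
  have "\<nu> \<le> diameter (fiber a b c p0 p1 p2 ?y)"
    using F diameter_bounded_bound[OF fiber_bounded in_fiber1[OF m s] in_fiber2[OF m s]]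
    by (simp add: F_def)
  moreover have "tri_pi a b c m s = ?y" using pi_leg[OF m] s by auto
  moreover have "tri_pi a b c (pv m) (S (pv m) - s) = ?y" using pi_leg2[OF m] s by auto
  moreover have "s \<in> {0..S m}" "S (pv m) - s \<in> {0..S (pv m)}"
    using s G_le_S[OF m] G_le_Spv[OF m] by auto
  ultimately show "P m s \<in> fat_side \<nu> a b c p0 p1 p2 m"
    and "P (pv m) (S (pv m) - s) \<in> fat_side \<nu> a b c p0 p1 p2 (pv m)"
    unfolding fat_side_def by (auto intro!: image_eqI)
qed

lemma pv_pv: "j < 3 \<Longrightarrow> pv (pv j) = nx j" using j3[of j] by (auto simp: nx_def pv_def)

lemma all_j: "j < 3 \<Longrightarrow> k < 3 \<Longrightarrow> j = k \<or> j = nx k \<or> j = pv k"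
  using j3[of j] j3[of k] by (auto simp: nx_def pv_def)

lemma D_bound:
  assumes nu: "\<nu> > 0" and k: "k < 3" and cm: "convex_metric (UNIV :: 'a set)"
    and L: "diameter (fat_side \<nu> a b c p0 p1 p2 k) \<le> L" and L0: "L \<ge> 0"
  shows "\<forall>j<3. F j (G j) \<le> 2 * (L + \<nu>)"
proof -
  define n where "n = nx k"
  have n: "n < 3" "pv n = k" using nx_lt pv_nx[OF k] by (auto simp: n_def)
  have Se: "S k = G k + G n" using S_eq[OF k] by (simp add: n_def)
  let ?fat = "fat_side \<nu> a b c p0 p1 p2 k"
  obtain u where u: "u \<in> {0..G k}" "F k (G k) \<le> 2 * (G k - u) + \<nu>"
    "F k (G k) > \<nu> \<longrightarrow> F k u \<ge> \<nu>" "F k (G k) \<le> \<nu> \<longrightarrow> u = G k"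
    using leg_choice[OF nu k cm] by blast
  obtain w where w: "w \<in> {0..G n}" "F n (G n) \<le> 2 * (G n - w) + \<nu>"
    "F n (G n) > \<nu> \<longrightarrow> F n w \<ge> \<nu>" "F n (G n) \<le> \<nu> \<longrightarrow> w = G n"
    using leg_choice[OF nu n(1) cm] by blast
  have sum: "F k (G k) + F n (G n) \<le> 2 * L + 2 * \<nu>"
  proof (cases "F k (G k) > \<nu> \<or> F n (G n) > \<nu>")
    case False then show ?thesis using L0 by auto
  next
    case True
    have cfat1: "P k (G k) \<in> ?fat" if "F k (G k) > \<nu>"
      using fat_pts(1)[OF k, of "G k" \<nu>] that G_nonneg[OF k] by auto
    have cfat2: "P k (G k) \<in> ?fat" if "F n (G n) > \<nu>"
      using fat_pts(2)[OF n(1), of "G n" \<nu>] that G_nonneg[OF n(1)] n Se by auto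
    have ufat: "P k u \<in> ?fat"
    proof (cases "F k (G k) > \<nu>")
      case True then show ?thesis using fat_pts(1)[OF k u(1)] u(3) by auto
    next
      case False then show ?thesis using u(4) True cfat2 by auto
    qed
    have wfat: "P k (S k - w) \<in> ?fat"
    proof (cases "F n (G n) > \<nu>")
      case True then show ?thesis using fat_pts(2)[OF n(1) w(1)] w(3) n by auto
    next
      case False then show ?thesis using w(4) True cfat1 Se by auto
    qed
    have "dist (P k u) (P k (S k - w)) \<le> L"
      using diameter_bounded_bound[OF fat_bounded[OF k] ufat wfat] L by linarith
    moreover have "dist (P k u) (P k (S k - w)) = (G k - u) + (G n - w)"
      using isom[OF k, of u "S k - w"] u(1) w(1) Se by auto
    ultimately show ?thesis using u(2) w(2) by (smt (verit))
  qed
  have "F (pv k) (G (pv k)) \<le> F k (G k) + F n (G n)"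
    using Fc[OF k] Fc[OF n(1)] Fc[OF pv_lt[of k]] pv_pv[OF k] n
      dist_triangle[of "P (pv k) (G (pv k))" "P n (G n)" "P k (G k)"]
    by (simp add: n_def dist_commute)
  then have p: "F (pv k) (G (pv k)) \<le> 2 * (L + \<nu>)" using sum by (smt (verit))
  show ?thesis
  proof (intro allI impI)
    fix j :: nat assume "j < 3"
    then have "j = k \<or> j = n \<or> j = pv k" using all_j[OF _ k] by (simp add: n_def)
    then show "F j (G j) \<le> 2 * (L + \<nu>)"
      using p sum F_nonneg[of k "G k"] F_nonneg[of n "G n"] by auto
  qed
qed

end

theorem lemma2p3:
  fixes Z :: "'a::metric_space set" and \<nu> L :: real
    and a b c :: 'a and p0 p1 p2 :: "real \<Rightarrow> 'a"
  assumes "geodesic_space (UNIV :: 'a set)"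
    and "convex_metric (UNIV :: 'a set)"
    and "\<nu> > 0" and "L \<ge> 0"
    and "geodesic_triangle a b c p0 p1 p2"
    and "rel_thin_triangle \<nu> Z a b c p0 p1 p2"
    and "\<exists>i<3. diameter (fat_side \<nu> a b c p0 p1 p2 i) \<le> L"
  shows "thin_triangle (2 * (L + \<nu>)) a b c p0 p1 p2"
proof -
  interpret tri a b c p0 p1 p2 using assms(5) by unfold_locales
  obtain k where k: "k < 3" "diameter (fat_side \<nu> a b c p0 p1 p2 k) \<le> L" using assms(7) by blast
  have D: "\<forall>j<3. F j (G j) \<le> 2 * (L + \<nu>)" using D_bound[OF assms(3) k(1) assms(2) k(2) assms(4)] .
  show ?thesis unfolding thin_triangle_def
  proof
    fix y
    show "diameter (fiber a b c p0 p1 p2 y) \<le> 2 * (L + \<nu>)"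
      by (rule diameter_le_metric) (use assms(3,4) pair_bound[OF _ _ assms(2) D] in auto)
  qed
qed

end
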